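(* Let $\sigma$ be the substitution $a\mapsto abab$, $b\mapsto b$ with fixed point $\mathbf{z}=\sigma^\omega(a)$, and $Z$ the orbit closure of $\mathbf{z}$. Define $p_1=a$ and $p_{k+1}=p_kb^kp_k$, so $\mathbf{z}=\lim_k p_k$. Then for every $k\ge1$, a word of the form $uab^k$ (with $u\in\{a,b\}^*$) is a right special factor of $\mathcal{L}(Z)$ if and only if it is a suffix of $b^kp_kb^k$.
   Context: $\mathcal{L}(Z)$ is the set of finite factors of $\mathbf{z}$ (equivalently of elements of $Z$). A word $w\in\mathcal{L}(Z)$ is right special if both $wa$ and $wb$ belong to $\mathcal{L}(Z)$. *)

theory Defs
  imports Main "HOL-Library.Sublist"
begin

datatype letter = A | B

fun sigma :: "letter \<Rightarrow> letter list" where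
  "sigma A = [A, B, A, B]"
| "sigma B = [B]"

definition sigma_word :: "letter list \<Rightarrow> letter list" where
  "sigma_word w = concat (map sigma w)"

text \<open>The fixed point z = sigma^omega(a): its n-th letter is the n-th letter
  of sigma^(n+1)(a) (which has length > n, and the iterates are prefixes of each other).\<close>
definition z :: "nat \<Rightarrow> letter" where
  "z n = ((sigma_word ^^ Suc n) [A]) ! n"

text \<open>The language L(Z): finite factors of z.\<close>
definition lang :: "letter list set" where
  "lang = {w. \<exists>i. w = map z [i..<i + length w]}"

definition right_special :: "letter list \<Rightarrow> bool" where
  "right_special w \<longleftrightarrow> w @ [A] \<in> lang \<and> w @ [B] \<in> lang"

text \<open>p_1 = a, p_(k+1) = p_k b^k p_k (index 0 is a dummy value).\<close>
fun p :: "nat \<Rightarrow> letter list" where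
  "p 0 = [A]"
| "p (Suc k) = (if k = 0 then [A] else p k @ replicate k B @ p k)"

end

theory Submission
  imports Defs
begin

fun v :: "nat \<Rightarrow> nat" where
  "v n = (if n = 0 \<or> odd n then 0 else Suc (v (n div 2)))"

declare v.simps[simp del]

lemma dvd_v: "n > 0 \<Longrightarrow> (2^i dvd n) \<longleftrightarrow> i \<le> v n"
proof (induction n arbitrary: i rule: v.induct)
  case (1 n)
  show ?case
  proof (cases "odd n")
    case True
    then show ?thesis
      by (cases i) (auto simp: v.simps dest: dvd_mult_left)
  next
    case False
    then obtain m where m: "n = 2*m" by auto
    with 1(2) have "m > 0" by simp
    have vn: "v n = Suc (v m)" using False 1(2) m by (simp add: v.simps)
    show ?thesis
    proof (cases i)
      case 0 then show ?thesis by simp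
    next
      case (Suc j)
      have "2^i dvd n \<longleftrightarrow> 2^j dvd m" using m Suc by simp
      also have "\<dots> \<longleftrightarrow> j \<le> v m" using 1(1)[of j] False 1(2) m \<open>m>0\<close> by simp
      finally show ?thesis using vn Suc by simp
    qed
  qed
qed

lemma v_add:
  assumes "2^e dvd x" "0 < j" "j < 2^e"
  shows "v (x + j) = v j"
proof -
  have "i \<le> v (x+j) \<longleftrightarrow> i \<le> v j" for i
  proof -
    have "2^i dvd (x+j) \<longleftrightarrow> 2^i dvd j"
    proof (cases "i \<le> e")
      case True
      then have "2^i dvd x" using assms(1) le_imp_power_dvd dvd_trans by blast
      then show ?thesis by (simp add: dvd_add_right_iff)
    next
      case False
      have "2^e < (2::nat)^i" using False by simp
      then have n1: "\<not> 2^i dvd j" using assms(2,3) dvd_imp_le[of "2^i" j] by linarith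
      have n2: "\<not> 2^e dvd j" using assms(2,3) dvd_imp_le[of "2^e" j] by linarith
      have "\<not> 2^i dvd (x+j)"
      proof
        assume "2^i dvd (x+j)"
        moreover have "2^e dvd (2::nat)^i" using False by (simp add: le_imp_power_dvd)
        ultimately have "2^e dvd (x+j)" using dvd_trans by blast
        then have "2^e dvd j" using assms(1) by (simp add: dvd_add_right_iff)
        with n2 show False by simp
      qed
      with n1 show ?thesis by simp
    qed
    then show ?thesis using dvd_v[of "x+j" i] dvd_v[of j i] assms(2) by simp
  qed
  then show ?thesis by (meson le_antisym order_refl)
qed

lemma v_pow_odd: "odd q \<Longrightarrow> v (2^e * q) = e"
proof -
  assume q: "odd q"
  then have pos: "2^e*q > 0" by (simp add: odd_pos)
  have "i \<le> v (2^e * q) \<longleftrightarrow> i \<le> e" for i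
  proof -
    have "2^i dvd 2^e * q \<longleftrightarrow> i \<le> e"
    proof
      assume h: "2^i dvd 2^e * q"
      show "i \<le> e"
      proof (rule ccontr)
        assume "\<not> i \<le> e"
        then have "2^(Suc e) dvd (2::nat)^i" by (intro le_imp_power_dvd) simp
        then have "2^(Suc e) dvd 2^e*q" using h dvd_trans by blast
        then have "2 dvd q" by simp
        with q show False by simp
      qed
    qed (simp add: le_imp_power_dvd)
    then show ?thesis using dvd_v[OF pos] by simp
  qed
  then show ?thesis by (meson le_antisym order_refl)
qed

definition blk :: "nat \<Rightarrow> letter list" where
  "blk n = replicate (Suc (v n)) B @ [A]"

definition pw :: "nat \<Rightarrow> letter list" where
  "pw N = A # concat (map blk [1..<N])"

lemma pw_Suc: "1 \<le> N \<Longrightarrow> pw (Suc N) = pw N @ blk N"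
  by (simp add: pw_def)

lemma pw_add: "1 \<le> x \<Longrightarrow> pw (x + d) = pw x @ concat (map blk [x..<x+d])"
proof -
  assume "1 \<le> x"
  then have "[1..<x+d] = [1..<x] @ [x..<x+d]" by (rule upt_add_eq_append)
  then show ?thesis unfolding pw_def by simp
qed

lemma L:
  assumes "2^e dvd x" "1 \<le> x"
  shows "pw (x + 2^e) = pw x @ replicate (Suc (v x)) B @ pw (2^e)"
proof -
  have u: "[x..<x+2^e] = x # [Suc x..<x+2^e]" by (simp add: upt_conv_Cons)
  have m: "map blk [Suc x..<x+2^e] = map blk [1..<2^e]"
  proof (rule nth_equalityI)
    fix i assume "i < length (map blk [Suc x..<x+2^e])"
    then have i: "Suc i < 2^e" by simp
    have "v (x + Suc i) = v (Suc i)" using v_add[OF assms(1) _ i] by simp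
    then show "map blk [Suc x..<x+2^e] ! i = map blk [1..<2^e] ! i"
      using i by (simp add: blk_def)
  qed simp
  have "concat (map blk [x..<x+2^e]) = replicate (Suc (v x)) B @ pw (2^e)"
    by (simp only: u list.map concat.simps m) (simp add: blk_def pw_def)
  then show ?thesis using pw_add[OF assms(2), of "2^e"] by simp
qed


lemma pw_last: "\<exists>t. pw N = t @ [A]"
proof (induction N)
  case 0 then show ?case by (simp add: pw_def)
next
  case (Suc N)
  show ?case
  proof (cases "N = 0")
    case True then show ?thesis by (simp add: pw_def)
  next
    case False
    then have "pw (Suc N) = pw N @ blk N" by (simp add: pw_Suc)
    then show ?thesis by (simp add: blk_def)
  qed
qed

lemma pw_prefix: "M \<le> N \<Longrightarrow> prefix (pw M) (pw N)"
proof (cases "M = 0")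
  case True
  then show ?thesis by (simp add: pw_def)
next
  case False
  assume "M \<le> N"
  then obtain d where "N = M + d" using le_Suc_ex by blast
  then show ?thesis using pw_add[of M d] False by simp
qed

lemma v_pow: "v (2^e) = e"
  using v_pow_odd[of 1 e] by simp

lemma pw_double: "pw (2^Suc e) = pw (2^e) @ replicate (Suc e) B @ pw (2^e)"
proof -
  have "pw (2^Suc e) = pw (2^e + 2^e)" by (simp only: power_Suc mult_2)
  also have "\<dots> = pw (2^e) @ replicate (Suc (v (2^e))) B @ pw (2^e)"
    by (rule L) simp_all
  finally show ?thesis by (simp add: v_pow)
qed

lemma p_pw: "1 \<le> k \<Longrightarrow> p k = pw (2^(k-1))"
proof (induction k)
  case 0 then show ?case by simp
next
  case (Suc k)
  show ?case
  proof (cases "k = 0")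
    case True then show ?thesis by (simp add: pw_def)
  next
    case False
    then have IH: "p k = pw (2^(k-1))" using Suc by simp
    obtain j where j: "k = Suc j" using False not0_implies_Suc by blast
    show ?thesis using IH False pw_double[of j] j by simp
  qed
qed

definition q :: "nat \<Rightarrow> letter list" where
  "q n = (sigma_word ^^ n) [A]"

lemma sw_append: "sigma_word (x @ y) = sigma_word x @ sigma_word y"
  by (simp add: sigma_word_def)

lemma swn_append: "(sigma_word ^^ n) (x @ y) = (sigma_word ^^ n) x @ (sigma_word ^^ n) y"
  by (induction n) (simp_all add: sw_append)

lemma swn_B: "(sigma_word ^^ n) [B] = [B]"
  by (induction n) (simp_all add: sigma_word_def)

lemma q_Suc: "q (Suc n) = q n @ [B] @ q n @ [B]"
proof -
  have "q (Suc n) = (sigma_word ^^ n) (sigma_word [A])"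
    unfolding q_def by (simp add: funpow_Suc_right del: funpow.simps)
  also have "sigma_word [A] = [A] @ [B] @ [A] @ [B]" by (simp add: sigma_word_def)
  finally have "q (Suc n) = (sigma_word ^^ n) ([A] @ [B] @ [A] @ [B])" .
  then show ?thesis by (simp only: swn_append swn_B q_def)
qed

lemma q_pw: "q n = pw (2^n) @ replicate n B"
proof (induction n)
  case 0 then show ?case by (simp add: q_def pw_def)
next
  case (Suc n)
  have "q (Suc n) = pw (2^n) @ (replicate n B @ [B]) @ pw (2^n) @ (replicate n B @ [B])"
    using Suc by (simp add: q_Suc)
  also have "replicate n B @ [B] = replicate (Suc n) B" by (simp add: replicate_append_same)
  finally show ?case using pw_double[of n] by simp
qed

lemma q_prefix: "m \<le> n \<Longrightarrow> prefix (q m) (q n)"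
proof (induction n)
  case 0 then show ?case by simp
next
  case (Suc n)
  show ?case
  proof (cases "m = Suc n")
    case True then show ?thesis by simp
  next
    case False
    then have "prefix (q m) (q n)" using Suc by simp
    moreover have "prefix (q n) (q (Suc n))" by (simp add: q_Suc)
    ultimately show ?thesis using prefix_order.trans by blast
  qed
qed

lemma q_len: "n < length (q n)"
  by (induction n) (simp_all add: q_Suc, simp add: q_def)

lemma prefix_nth': "prefix xs ys \<Longrightarrow> i < length xs \<Longrightarrow> xs ! i = ys ! i"
  by (auto simp: prefix_def nth_append)

lemma z_q: "i < length (q n) \<Longrightarrow> z i = q n ! i"
proof -
  assume i: "i < length (q n)"
  define M where "M = max n (Suc i)"
  have "z i = q (Suc i) ! i" by (simp add: z_def q_def)
  also have "\<dots> = q M ! i"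
    by (intro prefix_nth' q_prefix) (use q_len[of "Suc i"] in \<open>simp_all add: M_def\<close>)
  also have "\<dots> = q n ! i"
    using q_prefix[of n M] i prefix_nth' M_def by (metis max.cobounded1)
  finally show ?thesis .
qed

lemma lang_char: "w \<in> lang \<longleftrightarrow> (\<exists>N. sublist w (pw N))"
proof
  assume "w \<in> lang"
  then obtain i where w: "w = map z [i..<i + length w]" by (auto simp: lang_def)
  define n where "n = i + length w"
  have len: "i + length w < length (q n)" using q_len[of n] n_def by simp
  have "w = take (length w) (drop i (q n))"
  proof (rule nth_equalityI)
    fix j assume "j < length w"
    then show "w ! j = take (length w) (drop i (q n)) ! j"
      using len z_q[of "i+j" n] by (subst w) simp
  qed (use len in simp)
  then have "sublist w (q n)" by (metis sublist_drop sublist_order.dual_order.trans sublist_take)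
  moreover have "prefix (q n) (pw (2^Suc n))"
    unfolding q_pw pw_double by (simp add: replicate_append_same[symmetric])
  ultimately show "\<exists>N. sublist w (pw N)" using prefix_imp_sublist sublist_order.order_trans by blast
next
  assume "\<exists>N. sublist w (pw N)"
  then obtain N where "sublist w (pw N)" by blast
  moreover have "prefix (pw N) (q N)"
  proof -
    have "N \<le> 2^N" using less_exp[of N] by linarith
    then have "prefix (pw N) (pw (2^N))" by (rule pw_prefix)
    then show ?thesis unfolding q_pw by (simp add: prefix_prefix)
  qed
  ultimately have "sublist w (q N)" using prefix_imp_sublist sublist_order.order_trans by blast
  then obtain ps ss where qN: "q N = ps @ w @ ss" by (auto simp: sublist_def)
  have "w = map z [length ps..<length ps + length w]"
  proof (rule nth_equalityI)
    fix j assume "j < length w"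
    then show "w ! j = map z [length ps..<length ps + length w] ! j"
      using z_q[of "length ps + j" N] qN by (simp add: nth_append)
  qed simp
  then show "w \<in> lang" unfolding lang_def by blast
qed


lemma prefix_rep_A: "prefix (t @ [A]) (replicate n B @ [A]) \<Longrightarrow> t @ [A] = replicate n B @ [A]"
proof (induction n arbitrary: t)
  case 0 then show ?case by (cases t) auto
next
  case (Suc n)
  show ?case
  proof (cases t)
    case Nil then show ?thesis using Suc.prems by simp
  next
    case (Cons a t')
    then have "a = B" "prefix (t' @ [A]) (replicate n B @ [A])" using Suc.prems by auto
    then show ?thesis using Suc.IH Cons by simp
  qed
qed

lemma pw_prefix_A: "prefix (ys @ [A]) (pw N) \<Longrightarrow> \<exists>x. 1 \<le> x \<and> ys @ [A] = pw x"
proof (induction N arbitrary: ys)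
  case 0
  then have "ys @ [A] = pw 1" by (cases ys) (auto simp: pw_def)
  then show ?case by blast
next
  case (Suc N)
  show ?case
  proof (cases "N = 0")
    case True
    then have "ys @ [A] = pw 1" using Suc.prems by (cases ys) (auto simp: pw_def)
    then show ?thesis by blast
  next
    case False
    then have e: "pw (Suc N) = pw N @ blk N" by (simp add: pw_Suc)
    from Suc.prems[unfolded e, unfolded prefix_append]
    show ?thesis
    proof
      assume "prefix (ys @ [A]) (pw N)" then show ?thesis using Suc.IH by blast
    next
      assume "\<exists>us. ys @ [A] = pw N @ us \<and> prefix us (blk N)"
      then obtain us where us: "ys @ [A] = pw N @ us" "prefix us (blk N)" by blast
      show ?thesis
      proof (cases "us = []")
        case True then show ?thesis using us False by (intro exI[of _ N]) auto
      next
        case nn: False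
        then obtain t where "us = t @ [A]" using us(1)
          by (metis append_butlast_last_id last_appendR last_snoc)
        then have "us = blk N" using us(2) prefix_rep_A unfolding blk_def by blast
        then have "ys @ [A] = pw (Suc N)" using us e by simp
        then show ?thesis by (intro exI[of _ "Suc N"]) simp
      qed
    qed
  qed
qed

lemma rep_cmp: "replicate a B @ A # r = replicate k B @ c # r' \<Longrightarrow> (a = k \<and> c = A) \<or> (k < a \<and> c = B)"
proof (induction a arbitrary: k)
  case 0 then show ?case by (cases k) auto
next
  case (Suc a)
  then show ?case by (cases k) auto
qed

lemma factor:
  assumes "sublist (t @ [A] @ replicate k B @ [c]) (pw N)"
  shows "\<exists>x. 1 \<le> x \<and> suffix (t @ [A]) (pw x) \<and> ((Suc (v x) = k \<and> c = A) \<or> (k < Suc (v x) \<and> c = B))"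
proof -
  obtain ps ss where N: "pw N = ps @ (t @ [A] @ replicate k B @ [c]) @ ss"
    using assms unfolding sublist_def by blast
  have N1: "pw N = ((ps @ t) @ [A]) @ (replicate k B @ c # ss)" using N by simp
  then have "prefix ((ps @ t) @ [A]) (pw N)" by (rule prefixI)
  then obtain x where x: "1 \<le> x" "(ps @ t) @ [A] = pw x" using pw_prefix_A by blast
  from N1 have N2: "pw N = pw x @ replicate k B @ c # ss" by (simp only: x(2))
  have "x < N"
  proof (rule ccontr)
    assume "\<not> x < N"
    then have "prefix (pw N) (pw x)" by (intro pw_prefix) simp
    then have "length (pw N) \<le> length (pw x)" by (rule prefix_length_le)
    moreover have "length (pw N) = length (pw x) + length (replicate k B @ c # ss)"
      using arg_cong[where f=length, OF N2] by (simp only: length_append)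
    moreover have "length (replicate k B @ c # ss) > 0" by simp
    ultimately show False by linarith
  qed
  define d where "d = N - Suc x"
  have d: "N = x + Suc d" using \<open>x < N\<close> by (simp add: d_def)
  have u: "[x..<x + Suc d] = x # [Suc x..<x + Suc d]" by (rule upt_conv_Cons) simp
  have "pw N = pw x @ concat (map blk [x..<x + Suc d])"
    unfolding d by (rule pw_add[OF x(1)])
  also have "\<dots> = pw x @ blk x @ concat (map blk [Suc x..<x + Suc d])"
    by (simp only: u list.map concat.simps)
  finally have "pw x @ blk x @ concat (map blk [Suc x..<x + Suc d]) = pw x @ replicate k B @ c # ss"
    using N2 by simp
  then have "blk x @ concat (map blk [Suc x..<x + Suc d]) = replicate k B @ c # ss"
    by (simp only: same_append_eq)
  then have "replicate (Suc (v x)) B @ A # concat (map blk [Suc x..<x + Suc d]) = replicate k B @ c # ss"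
    by (simp only: blk_def append_assoc append_Cons append_Nil)
  then have "(Suc (v x) = k \<and> c = A) \<or> (k < Suc (v x) \<and> c = B)" by (rule rep_cmp)
  moreover have "pw x = ps @ (t @ [A])" using x(2) by simp
  then have "suffix (t @ [A]) (pw x)" by (rule suffixI)
  ultimately show ?thesis using x(1) by blast
qed

lemma core:
  assumes k: "1 \<le> k" and x: "1 \<le> x" "Suc (v x) = k" and y: "1 \<le> y" "k < Suc (v y)"
    and sx: "suffix s (pw x)" and sy: "suffix s (pw y)"
  shows "suffix s (replicate k B @ pw (2^(k-1)))"
proof -
  define e where "e = k - 1"
  define h :: nat where "h = 2^e"
  have ke: "k = Suc e" using k e_def by simp
  have hpos: "1 \<le> h" by (simp add: h_def)
  define W where "W = replicate k B @ pw h"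
  have "2^Suc e dvd y" using dvd_v[of y "Suc e"] y ke by simp
  then obtain t where t: "y = 2*h*t" by (auto simp: h_def)
  with y(1) have "t \<ge> 1" by (cases t) auto
  define y0 where "y0 = h * (2*t - 1)"
  have y0y: "y = y0 + h" using t \<open>t \<ge> 1\<close> by (simp add: y0_def algebra_simps)
  have "odd (2*t - 1)" using \<open>t \<ge> 1\<close> by simp
  then have vy0: "v y0 = e" unfolding y0_def h_def by (rule v_pow_odd)
  have "2*t - 1 \<ge> 1" using \<open>t \<ge> 1\<close> by linarith
  then have y0pos: "1 \<le> y0" using hpos by (simp add: y0_def)
  have "pw y = pw y0 @ replicate (Suc (v y0)) B @ pw h"
    unfolding y0y h_def by (rule L) (simp add: y0_def h_def, use y0pos in \<open>simp add: h_def\<close>)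
  moreover obtain Y where "pw y0 = Y @ [A]" using pw_last by blast
  ultimately have py: "pw y = Y @ A # W" using vy0 ke by (simp add: W_def)
  have "2^e dvd x" using dvd_v[of x e] x ke by simp
  then obtain qq where qq: "x = h * qq" by (auto simp: h_def)
  have "\<not> 2^Suc e dvd x" using dvd_v[of x "Suc e"] x ke by simp
  then have oq: "odd qq" using qq by (auto simp: h_def)
  show ?thesis
  proof (cases "qq = 1")
    case True
    then have "pw x = pw h" using qq by simp
    then have "suffix s (replicate k B @ pw h)" using sx by (simp add: suffix_appendI)
    then show ?thesis by (simp add: h_def e_def)
  next
    case False
    moreover have "qq \<noteq> 0" using odd_pos[OF oq] by simp
    moreover have "qq \<noteq> 2" using oq by auto
    ultimately have "qq \<ge> 3" by linarith
    define x0 where "x0 = h * (qq - 1)"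
    have x0x: "x = x0 + h" using qq \<open>qq \<ge> 3\<close> by (simp add: x0_def algebra_simps)
    have "even (qq - 1)" using oq \<open>qq \<ge> 3\<close> by simp
    then obtain r where r: "qq - 1 = 2 * r" by blast
    have "r \<ge> 1" using r \<open>qq \<ge> 3\<close> by simp
    have x0pos: "x0 > 0" using \<open>qq \<ge> 3\<close> by (simp add: x0_def h_def)
    have "2^Suc e dvd x0" using r by (simp add: x0_def h_def)
    then have vx0: "Suc e \<le> v x0" using dvd_v[OF x0pos, of "Suc e"] by simp
    have "pw x = pw x0 @ replicate (Suc (v x0)) B @ pw h"
      unfolding x0x h_def by (rule L) (use x0pos in \<open>simp_all add: x0_def h_def\<close>)
    moreover have "Suc (v x0) = (v x0 - k) + Suc k" using vx0 ke by simp
    then have "replicate (Suc (v x0)) B = replicate (v x0 - k) B @ replicate (Suc k) B"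
      by (simp only: replicate_add)
    ultimately have "pw x = (pw x0 @ replicate (v x0 - k) B) @ (B # W)" by (simp add: W_def)
    then have px: "suffix (B # W) (pw x)" by (rule suffixI)
    have pyW: "suffix (A # W) (pw y)" using py by (simp add: suffix_def)
    have bad: "\<not> suffix (A # W) (pw x)"
    proof
      assume "suffix (A # W) (pw x)"
      then have "suffix (A # W) (B # W)" using suffix_length_suffix[OF _ px] by simp
      then have "A # W = B # W \<or> suffix (A # W) W" by (simp only: suffix_Cons)
      moreover have "\<not> suffix (A # W) W" using suffix_length_le by fastforce
      ultimately show False by simp
    qed
    from suffix_same_cases[OF sy pyW] show ?thesis
    proof
      assume "suffix s (A # W)"
      then have "s = A # W \<or> suffix s W" by (simp add: suffix_Cons)
      moreover have "W = replicate k B @ pw (2^(k-1))" by (simp add: W_def h_def e_def)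
      ultimately show ?thesis using bad sx by auto
    next
      assume "suffix (A # W) s"
      then have "suffix (A # W) (pw x)" using sx suffix_order.trans by blast
      with bad show ?thesis by simp
    qed
  qed
qed

theorem mainTheorem8:
  fixes k :: nat and u :: "letter list"
  assumes "k \<ge> 1"
  shows "right_special (u @ [A] @ replicate k B) \<longleftrightarrow>
         suffix (u @ [A] @ replicate k B) (replicate k B @ p k @ replicate k B)"
proof -
  define h :: nat where "h = 2^(k-1)"
  have pk: "p k = pw h" using p_pw assms h_def by simp
  have eq: "suffix (u @ [A] @ replicate k B) (replicate k B @ p k @ replicate k B)
      \<longleftrightarrow> suffix (u @ [A]) (replicate k B @ pw h)"
    using same_suffix_suffix[of "u @ [A]" "replicate k B" "replicate k B @ pw h"] pk by simp
  show ?thesis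
  proof
    assume rs: "right_special (u @ [A] @ replicate k B)"
    then obtain N1 where "sublist (u @ [A] @ replicate k B @ [A]) (pw N1)"
      unfolding right_special_def lang_char by auto
    then obtain x where x: "1 \<le> x" "suffix (u @ [A]) (pw x)" "Suc (v x) = k"
      using factor by blast
    from rs obtain N2 where "sublist (u @ [A] @ replicate k B @ [B]) (pw N2)"
      unfolding right_special_def lang_char by auto
    then obtain y where y: "1 \<le> y" "suffix (u @ [A]) (pw y)" "k < Suc (v y)"
      using factor by blast
    have "suffix (u @ [A]) (replicate k B @ pw h)"
      using core[OF assms x(1) x(3) y(1) y(3) x(2) y(2)] h_def by simp
    then show "suffix (u @ [A] @ replicate k B) (replicate k B @ p k @ replicate k B)"
      using eq by simp
  next
    assume "suffix (u @ [A] @ replicate k B) (replicate k B @ p k @ replicate k B)"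
    then have su: "suffix (u @ [A]) (replicate k B @ pw h)" using eq by simp
    obtain e where ke: "k = Suc e" using assms by (cases k) auto
    have he: "h = 2^e" using h_def ke by simp
    obtain R where R: "pw h = A # R" by (simp add: pw_def)
    have big: "pw (2^Suc (Suc e)) = pw h @ replicate k B @ pw h @ replicate (Suc k) B @ pw h @ replicate k B @ pw h"
      using pw_double[of "Suc e"] pw_double[of e] he ke by simp
    have "sublist (replicate k B @ pw h @ replicate k B @ [B]) (pw (2^Suc (Suc e)))"
    proof -
      have "pw (2^Suc (Suc e)) = pw h @ (replicate k B @ pw h @ replicate k B @ [B]) @ (pw h @ replicate k B @ pw h)"
        using big by (simp add: replicate_append_same[symmetric])
      then show ?thesis by (metis sublist_appendI)
    qed
    moreover have "sublist (replicate k B @ pw h @ replicate k B @ [A]) (pw (2^Suc (Suc e)))"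
    proof -
      have "pw (2^Suc (Suc e)) = (pw h @ replicate k B @ pw h @ [B]) @ (replicate k B @ pw h @ replicate k B @ [A]) @ R"
        using big R by simp
      then show ?thesis by (metis sublist_appendI)
    qed
    moreover have "suffix (u @ [A] @ replicate k B @ [c]) (replicate k B @ pw h @ replicate k B @ [c])" for c
      using su same_suffix_suffix[of "u @ [A]" "replicate k B @ [c]" "replicate k B @ pw h"] by simp
    ultimately have "sublist (u @ [A] @ replicate k B @ [c]) (pw (2^Suc (Suc e)))" for c
      using suffix_imp_sublist sublist_order.order_trans
      by (cases c) blast+
    then show "right_special (u @ [A] @ replicate k B)"
      unfolding right_special_def lang_char by (metis append_assoc)
  qed
qed

end
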